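(* Let $(\mathcal{S}_n)_{n\in\mathbb{N}}$ be a sequence of solid subsets of $\mathbb{L}^0_+$. Then $\bigcap_{n\in\mathbb{N}}\mathcal{S}_n=\{0\}$ holds if and only if $\bigcap_{n\in\mathbb{N}}\overline{\mathcal{S}_n}=\{0\}$, where $\overline{\mathcal{S}_n}$ is the closure of $\mathcal{S}_n$ in $\mathbb{L}^0$.
   Context: $(\Omega,\mathcal{F},\mathbb{P})$ is a probability space; $\mathbb{L}^0$ is the space of (equivalence classes modulo null sets of) real-valued random variables with the topology of convergence in probability; $\mathbb{L}^0_+$ its nonnegative elements. $\mathcal{S}\subseteq\mathbb{L}^0_+$ is solid if $Y\in\mathbb{L}^0_+$, $X\in\mathcal{S}$, $Y\le X$ imply $Y\in\mathcal{S}$. *)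

theory Defs
  imports "HOL-Probability.Probability"
begin

text \<open>Elements of L^0 are represented by real-valued measurable functions;
  a set of equivalence classes is represented by the set of all its representatives.\<close>

definition L0 :: "'a measure \<Rightarrow> ('a \<Rightarrow> real) set" where
  "L0 M = borel_measurable M"

definition L0_plus :: "'a measure \<Rightarrow> ('a \<Rightarrow> real) set" where
  "L0_plus M = {f \<in> L0 M. AE x in M. 0 \<le> f x}"

definition L0_zero :: "'a measure \<Rightarrow> ('a \<Rightarrow> real) set" where
  "L0_zero M = {f \<in> L0 M. AE x in M. f x = 0}"

definition solid :: "'a measure \<Rightarrow> ('a \<Rightarrow> real) set \<Rightarrow> bool" where
  "solid M S \<longleftrightarrow> S \<subseteq> L0_plus M \<and>
     (\<forall>X\<in>S. \<forall>Y\<in>L0_plus M. (AE x in M. Y x \<le> X x) \<longrightarrow> Y \<in> S)"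

text \<open>Standard metric inducing the topology of convergence in probability.\<close>
definition L0_dist :: "'a measure \<Rightarrow> ('a \<Rightarrow> real) \<Rightarrow> ('a \<Rightarrow> real) \<Rightarrow> real" where
  "L0_dist M f g = (\<integral>x. min \<bar>f x - g x\<bar> 1 \<partial>M)"

definition L0_closure :: "'a measure \<Rightarrow> ('a \<Rightarrow> real) set \<Rightarrow> ('a \<Rightarrow> real) set" where
  "L0_closure M S = {f \<in> L0 M. \<forall>e>0. \<exists>g\<in>S. L0_dist M f g < e}"

end

theory Submission
  imports Defs
begin

lemma (in prob_space) markov_L0:
  assumes f: "f \<in> borel_measurable M" and g: "g \<in> borel_measurable M"
    and c: "0 < c" "c \<le> 1"
  shows "measure M {x\<in>space M. c \<le> \<bar>f x - g x\<bar>} \<le> L0_dist M f g / c"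
proof -
  have int: "integrable M (\<lambda>x. min \<bar>f x - g x\<bar> 1)"
    by (rule integrable_const_bound[where B=1]) (use f g in auto)
  have "measure M {x\<in>space M. c \<le> min \<bar>f x - g x\<bar> 1} \<le> (\<integral>x. min \<bar>f x - g x\<bar> 1 \<partial>M) / c"
    by (rule integral_Markov_inequality_measure[OF int, where A="space M"]) (use c in auto)
  moreover have "{x\<in>space M. c \<le> min \<bar>f x - g x\<bar> 1} = {x\<in>space M. c \<le> \<bar>f x - g x\<bar>}"
    using c by auto
  ultimately show ?thesis by (simp add: L0_dist_def)
qed

lemma (in prob_space) key:
  fixes S :: "nat \<Rightarrow> ('a \<Rightarrow> real) set"
  assumes sol: "\<And>n. solid M (S n)"
    and Z: "(\<Inter>n. S n) = L0_zero M"
    and f: "f \<in> L0 M" and fc: "\<And>n. f \<in> L0_closure M (S n)"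
    and d: "0 < d" "d \<le> 1"
  shows "measure M {x\<in>space M. d < \<bar>f x\<bar>} = 0"
proof (rule ccontr)
  have fm[measurable]: "f \<in> borel_measurable M" using f by (simp add: L0_def)
  define A where "A = {x\<in>space M. d < \<bar>f x\<bar>}"
  define p where "p = measure M A"
  assume "measure M {x\<in>space M. d < \<bar>f x\<bar>} \<noteq> 0"
  then have p: "p > 0" unfolding p_def A_def using measure_nonneg
    by (simp add: order_less_le)
  define e where "e n = d / 2 * (p / 4 * (1/2)^n)" for n :: nat
  have epos: "e n > 0" for n using d p by (simp add: e_def)
  have "\<forall>n::nat. \<exists>g. g \<in> S n \<and> L0_dist M f g < e n"
    using fc epos unfolding L0_closure_def by blast
  then obtain g where g: "\<And>n. g n \<in> S n" and gd: "\<And>n. L0_dist M f (g n) < e n"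
    by metis
  have gp: "g n \<in> L0_plus M" for n using g sol unfolding solid_def by blast
  have gm[measurable]: "g n \<in> borel_measurable M" for n using gp by (simp add: L0_plus_def L0_def)
  have gnn: "AE x in M. \<forall>n. 0 \<le> g n x"
    using gp by (simp add: L0_plus_def AE_all_countable)
  define E where "E n = {x\<in>space M. d/2 \<le> \<bar>f x - g n x\<bar>}" for n
  have Es[measurable]: "E n \<in> sets M" for n unfolding E_def by measurable
  have Em: "measure M (E n) \<le> p / 4 * (1/2)^n" for n
  proof -
    have "measure M (E n) \<le> L0_dist M f (g n) / (d/2)"
      unfolding E_def by (rule markov_L0) (use d in auto)
    also have "\<dots> \<le> e n / (d/2)" using gd[of n] d by (simp add: divide_right_mono less_imp_le)
    also have "\<dots> = p / 4 * (1/2)^n" using d by (simp add: e_def)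
    finally show ?thesis .
  qed
  have sumg: "(\<lambda>n. p / 4 * (1/2::real)^n) sums (p/4 * 2)"
    using geometric_sums[of "1/2::real"] by (intro sums_mult) auto
  have summ: "summable (\<lambda>n. measure M (E n))"
    by (rule summable_comparison_test[OF _ sums_summable[OF sumg]]) (use Em in auto)
  have U: "measure M (\<Union>n. E n) \<le> p/2"
  proof -
    have "measure M (\<Union>n. E n) \<le> (\<Sum>n. measure M (E n))"
      by (rule finite_measure_subadditive_countably) (use summ in auto)
    also have "\<dots> \<le> (\<Sum>n. p / 4 * (1/2::real)^n)"
      by (rule suminf_le[OF Em summ sums_summable[OF sumg]])
    also have "\<dots> = p/2" using sums_unique[OF sumg] by simp
    finally show ?thesis .
  qed
  have Es': "range E \<subseteq> sets M" using Es by auto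
  define B where "B = A - (\<Union>n. E n)"
  have As[measurable]: "A \<in> sets M" unfolding A_def by measurable
  have Bs[measurable]: "B \<in> sets M" unfolding B_def by measurable
  define X where "X x = d/2 * indicator B x" for x
  have Xm[measurable]: "X \<in> borel_measurable M" unfolding X_def by measurable
  have XP: "X \<in> L0_plus M" using d by (auto simp: L0_plus_def L0_def X_def)
  have "X \<in> S n" for n
  proof -
    have "AE x in M. X x \<le> g n x"
      using gnn
    proof eventually_elim
      case (elim x)
      show ?case
      proof (cases "x \<in> B")
        case True
        then have h1: "d < \<bar>f x\<bar>" and h2: "\<bar>f x - g n x\<bar> < d/2"
          by (auto simp: B_def A_def E_def not_le)
        have h3: "0 \<le> g n x" using elim by blast
        have h4: "f x - g n x < d/2" "g n x - f x < d/2" using h2 by (simp_all only: abs_less_iff) linarith+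
        have h5: "d < f x \<or> f x < - d" using h1 by linarith
        have "d/2 < g n x"
          using h3 h4 h5 by linarith
        then show ?thesis using True by (simp add: X_def)
      next
        case False then show ?thesis using elim by (auto simp: X_def)
      qed
    qed
    then show ?thesis using g[of n] sol[of n] XP unfolding solid_def by blast
  qed
  then have "X \<in> L0_zero M" using Z by blast
  then have "AE x in M. X x = 0" by (simp add: L0_zero_def)
  then have "AE x in M. x \<notin> B" using d by (auto simp: X_def elim!: AE_mp)
  then have "emeasure M B = 0"
    using AE_iff_measurable[OF Bs, of "\<lambda>x. x \<notin> B"] sets.sets_into_space[OF Bs] by auto
  then have B0: "measure M B = 0" by (simp add: measure_def)
  have "A \<subseteq> B \<union> (\<Union>n. E n)" by (auto simp: B_def)
  then have "p \<le> measure M (B \<union> (\<Union>n. E n))" unfolding p_def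
    by (intro finite_measure_mono) auto
  also have "\<dots> \<le> measure M B + measure M (\<Union>n. E n)"
    using measure_Un_le[OF Bs sets.countable_UN[OF Es'] ] by simp
  also have "\<dots> \<le> p/2" using B0 U by simp
  finally show False using p by simp
qed

theorem lemmaA2:
  fixes M :: "'a measure" and S :: "nat \<Rightarrow> ('a \<Rightarrow> real) set"
  assumes "prob_space M"
    and "\<And>n. solid M (S n)"
  shows "(\<Inter>n. S n) = L0_zero M \<longleftrightarrow> (\<Inter>n. L0_closure M (S n)) = L0_zero M"
proof -
  interpret prob_space M by fact
  have sub: "S n \<subseteq> L0_closure M (S n)" for n
  proof
    fix f assume "f \<in> S n"
    moreover have "f \<in> L0 M" using \<open>f \<in> S n\<close> assms(2)[of n]
      by (auto simp: solid_def L0_plus_def)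
    moreover have "L0_dist M f f = 0" by (simp add: L0_dist_def)
    ultimately show "f \<in> L0_closure M (S n)" unfolding L0_closure_def by force
  qed
  have zsub: "L0_zero M \<subseteq> S n" if ne: "S n \<noteq> {}" for n
  proof
    fix Y assume Y: "Y \<in> L0_zero M"
    obtain X where X: "X \<in> S n" using ne by blast
    then have "X \<in> L0_plus M" using assms(2)[of n] by (auto simp: solid_def)
    moreover have "Y \<in> L0_plus M" using Y by (auto simp: L0_zero_def L0_plus_def elim: AE_mp)
    moreover have "AE x in M. Y x \<le> X x" using Y \<open>X \<in> L0_plus M\<close>
      by (auto simp: L0_zero_def L0_plus_def elim: AE_mp)
    ultimately show "Y \<in> S n" using X assms(2)[of n] unfolding solid_def by blast
  qed
  have z0: "(\<lambda>x. 0) \<in> L0_zero M" by (simp add: L0_zero_def L0_def)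
  show ?thesis
  proof
    assume Z: "(\<Inter>n. S n) = L0_zero M"
    show "(\<Inter>n. L0_closure M (S n)) = L0_zero M"
    proof
      have "(\<Inter>n. S n) \<subseteq> (\<Inter>n. L0_closure M (S n))" by (rule INF_mono') (rule sub)
      then show "L0_zero M \<subseteq> (\<Inter>n. L0_closure M (S n))" using Z by simp
      show "(\<Inter>n. L0_closure M (S n)) \<subseteq> L0_zero M"
      proof
        fix f assume fc: "f \<in> (\<Inter>n. L0_closure M (S n))"
        then have fL: "f \<in> L0 M" by (auto simp: L0_closure_def)
        then have fm[measurable]: "f \<in> borel_measurable M" by (simp add: L0_def)
        have "AE x in M. \<bar>f x\<bar> \<le> 1 / Suc k" for k :: nat
        proof -
          have m0: "measure M {x\<in>space M. 1 / Suc k < \<bar>f x\<bar>} = 0"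
            by (rule key[OF assms(2) Z fL]) (use fc in auto)
          have "emeasure M {x\<in>space M. 1 / Suc k < \<bar>f x\<bar>} = 0"
            using m0 by (simp add: emeasure_eq_measure)
          then show ?thesis
            by (subst AE_iff_measurable[where N="{x\<in>space M. 1 / Suc k < \<bar>f x\<bar>}"]) (auto simp: not_le)
        qed
        then have "AE x in M. \<forall>k::nat. \<bar>f x\<bar> \<le> 1 / Suc k" by (simp add: AE_all_countable)
        then have "AE x in M. f x = 0"
        proof (rule AE_mp, intro AE_I2 impI)
          fix x assume H: "\<forall>k::nat. \<bar>f x\<bar> \<le> 1 / Suc k"
          show "f x = 0"
          proof (rule ccontr)
            assume "f x \<noteq> 0"
            then obtain k :: nat where "1 / Suc k < \<bar>f x\<bar>"
              using reals_Archimedean[of "\<bar>f x\<bar>"] by (auto simp: inverse_eq_divide)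
            then show False using H by (meson not_le)
          qed
        qed
        then show "f \<in> L0_zero M" using fL by (simp add: L0_zero_def)
      qed
    qed
  next
    assume Z: "(\<Inter>n. L0_closure M (S n)) = L0_zero M"
    have ne: "S n \<noteq> {}" for n
    proof
      assume "S n = {}"
      have "(\<lambda>x. 0) \<in> L0_closure M (S n)" using Z z0 by blast
      then have "\<forall>e>0. \<exists>g\<in>S n. L0_dist M (\<lambda>x. 0) g < e" unfolding L0_closure_def by simp
      then have "0 < (1::real) \<longrightarrow> (\<exists>g\<in>S n. L0_dist M (\<lambda>x. 0) g < 1)" by (rule spec)
      then have "\<exists>g\<in>S n. L0_dist M (\<lambda>x. 0) g < 1" by simp
      then show False using \<open>S n = {}\<close> by blast
    qed
    have "L0_zero M \<subseteq> S n" for n using zsub[OF ne] .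
    then have "L0_zero M \<subseteq> (\<Inter>n. S n)" by (simp add: INT_greatest)
    moreover have "(\<Inter>n. S n) \<subseteq> (\<Inter>n. L0_closure M (S n))" by (rule INF_mono') (rule sub)
    ultimately show "(\<Inter>n. S n) = L0_zero M" using Z by (simp add: subset_antisym)
  qed
qed

end
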